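(* Every randomized online algorithm for non-clairvoyant dynamic bin packing that makes $o(n)$ migrations in expectation (on instances with $n$ items) has competitive ratio at least $\frac{\mu}{6}$, where $\mu$ is the ratio of the longest to the shortest item duration.
   Context: Dynamic bin packing: bins have capacity $1$; items arrive online at times $a_i\ge0$ with size $s_i\in[0,1]$ and duration $d_i>0$, present during $[a_i,a_i+d_i)$; only the size is revealed at arrival. Each arriving item is placed in an open bin with enough remaining capacity or a new bin; a migration moves an already placed item to another bin, counted by number of moves. Cost = total active time $\int_0^\infty(\text{number of nonempty bins at } t)\,dt$. $\mathrm{OPT}(I)=\int_0^\infty\mathrm{OPT}_t\,dt$ with $\mathrm{OPT}_t$ the minimum number of unit bins to pack the items present at time $t$. Competitive ratio at least $\gamma$ means: for every $\beta<\gamma$ there is an instance (with durations ratio $\mu$) on which the expected cost exceeds $\beta\,\mathrm{OPT}$. *)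

theory Defs
  imports "HOL-Probability.Probability" "HOL-Library.Landau_Symbols"
begin

type_synonym item = "real \<times> real \<times> real"

definition arr :: "item \<Rightarrow> real" where "arr x = fst x"
definition size_of :: "item \<Rightarrow> real" where "size_of x = fst (snd x)"
definition dur :: "item \<Rightarrow> real" where "dur x = snd (snd x)"

definition valid_instance :: "item list \<Rightarrow> bool" where
  "valid_instance I \<longleftrightarrow>
     (\<forall>x \<in> set I. 0 \<le> arr x \<and> 0 \<le> size_of x \<and> size_of x \<le> 1 \<and> 0 < dur x)"

definition has_dur_ratio :: "real \<Rightarrow> item list \<Rightarrow> bool" where
  "has_dur_ratio \<mu> I \<longleftrightarrow> I \<noteq> [] \<and> Max (dur ` set I) / Min (dur ` set I) = \<mu>"

definition active :: "item list \<Rightarrow> nat \<Rightarrow> real \<Rightarrow> bool" where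
  "active I i t \<longleftrightarrow> i < length I \<and> arr (I ! i) \<le> t \<and> t < arr (I ! i) + dur (I ! i)"

text \<open>What an online non-clairvoyant algorithm knows at time t: for each item that
has arrived by time t its arrival time and size, and its duration only if it has
already departed (departure time at most t).\<close>
definition view :: "item list \<Rightarrow> real \<Rightarrow> nat \<Rightarrow> (real \<times> real \<times> real option) option" where
  "view I t i =
     (if i < length I \<and> arr (I ! i) \<le> t
      then Some (arr (I ! i), size_of (I ! i),
                 if arr (I ! i) + dur (I ! i) \<le> t then Some (dur (I ! i)) else None)
      else None)"

text \<open>A (deterministic) packing: P I i t is the bin (a natural-number label) holding
item i at time t.  Only the values while the item is present matter.\<close>
type_synonym packing_alg = "item list \<Rightarrow> nat \<Rightarrow> real \<Rightarrow> nat"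

text \<open>Deterministic online non-clairvoyant algorithm with migrations: the packing is
feasible (unit capacity) at every time, and the bin of every arrived item at time t
depends only on the information revealed up to time t.\<close>
definition det_online_alg :: "packing_alg \<Rightarrow> bool" where
  "det_online_alg P \<longleftrightarrow>
     (\<forall>I t b. valid_instance I \<longrightarrow>
        (\<Sum>i \<in> {i. active I i t \<and> P I i t = b}. size_of (I ! i)) \<le> 1) \<and>
     (\<forall>I J t. valid_instance I \<longrightarrow> valid_instance J \<longrightarrow> view I t = view J t \<longrightarrow>
        (\<forall>i. i < length I \<and> arr (I ! i) \<le> t \<longrightarrow> P I i t = P J i t))"

text \<open>Number of moves of a function f (bin of one item over time) during [a, a+d):
the number of bin changes, i.e. the supremum over finite increasing sequences of
sample times in [a, a+d) of the number of consecutive samples in different bins.\<close>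
definition moves :: "(real \<Rightarrow> nat) \<Rightarrow> real \<Rightarrow> real \<Rightarrow> ennreal" where
  "moves f a d = Sup {ennreal (real (card {j. j < k \<and> f (ts j) \<noteq> f (ts (Suc j))})) | ts k.
                        (\<forall>j \<le> k. a \<le> ts j \<and> ts j < a + d) \<and> (\<forall>j < k. ts j < ts (Suc j))}"

definition migrations :: "packing_alg \<Rightarrow> item list \<Rightarrow> ennreal" where
  "migrations P I = (\<Sum>i < length I. moves (P I i) (arr (I ! i)) (dur (I ! i)))"

text \<open>Cost = total active time = integral of the number of nonempty bins.\<close>
definition cost :: "packing_alg \<Rightarrow> item list \<Rightarrow> ennreal" where
  "cost P I = (\<integral>\<^sup>+ t. ennreal (real (card {P I i t | i. active I i t})) \<partial>lborel)"

definition opt_at :: "item list \<Rightarrow> real \<Rightarrow> nat" where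
  "opt_at I t = (LEAST k. \<exists>f :: nat \<Rightarrow> nat.
       (\<forall>i. active I i t \<longrightarrow> f i < k) \<and>
       (\<forall>b. (\<Sum>i \<in> {i. active I i t \<and> f i = b}. size_of (I ! i)) \<le> 1))"

definition OPT :: "item list \<Rightarrow> ennreal" where
  "OPT I = (\<integral>\<^sup>+ t. ennreal (real (opt_at I t)) \<partial>lborel)"

text \<open>A randomized online algorithm: a probability space M together with a
deterministic online algorithm A w for every outcome w, such that cost and number
of migrations are random variables on every valid instance.\<close>
definition randomized_online_alg :: "'w measure \<Rightarrow> ('w \<Rightarrow> packing_alg) \<Rightarrow> bool" where
  "randomized_online_alg M A \<longleftrightarrow>
     prob_space M \<and>
     (\<forall>w \<in> space M. det_online_alg (A w)) \<and>
     (\<forall>I. valid_instance I \<longrightarrow>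
        (\<lambda>w. cost (A w) I) \<in> borel_measurable M \<and>
        (\<lambda>w. migrations (A w) I) \<in> borel_measurable M)"

definition expected_cost :: "'w measure \<Rightarrow> ('w \<Rightarrow> packing_alg) \<Rightarrow> item list \<Rightarrow> ennreal" where
  "expected_cost M A I = (\<integral>\<^sup>+ w. cost (A w) I \<partial>M)"

definition expected_migrations :: "'w measure \<Rightarrow> ('w \<Rightarrow> packing_alg) \<Rightarrow> item list \<Rightarrow> ennreal" where
  "expected_migrations M A I = (\<integral>\<^sup>+ w. migrations (A w) I \<partial>M)"

end

theory Submission
  imports Defs
begin

definition Phi :: "nat \<Rightarrow> nat \<Rightarrow> (nat \<Rightarrow> nat) set" where
  "Phi G m = PiE {..<m} (\<lambda>_. {..<G})"
definition LL :: "nat \<Rightarrow> nat \<Rightarrow> (nat \<Rightarrow> nat) \<Rightarrow> nat set" where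
  "LL G m \<phi> = {i. i < G*m \<and> \<phi> (i div G) = i mod G}"

lemma finite_Phi: "finite (Phi G m)"
  unfolding Phi_def by (simp add: finite_PiE)

lemma card_Phi: "card (Phi G m) = G ^ m"
  unfolding Phi_def by (simp add: card_PiE)

lemma prod_one_out:
  assumes "r < m"
  shows "(\<Prod>a<m. (if a = r then 1 else G)) = (G::nat) ^ (m - 1)"
proof -
  have "(\<Prod>a<m. (if a = r then 1 else G)) = (if r = r then 1 else G) * (\<Prod>a\<in>{..<m} - {r}. (if a = r then 1 else G))"
    using assms by (subst prod.remove[of _ r]) auto
  also have "\<dots> = (\<Prod>a\<in>{..<m} - {r}. G)" by (auto intro!: prod.cong)
  also have "\<dots> = G ^ (m - 1)" using assms by simp
  finally show ?thesis .
qed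

lemma prod_two_out:
  assumes "r < m" "s < m" "r \<noteq> s"
  shows "(\<Prod>a<m. (if a = r then 1 else if a = s then 1 else G)) = (G::nat) ^ (m - 2)"
proof -
  have "(\<Prod>a<m. (if a = r then 1 else if a = s then 1 else G)) =
      (if r = r then 1 else if r = s then 1 else G) * (\<Prod>a\<in>{..<m} - {r}. (if a = r then 1 else if a = s then 1 else G))"
    using assms by (subst prod.remove[of _ r]) auto
  also have "\<dots> = (\<Prod>a\<in>{..<m} - {r}. (if a = s then 1 else G))" by (auto intro!: prod.cong)
  also have "\<dots> = (if s = s then 1 else G) * (\<Prod>a\<in>{..<m} - {r} - {s}. (if a = s then 1 else G))"
    using assms by (subst prod.remove[of _ s]) auto
  also have "\<dots> = (\<Prod>a\<in>{..<m} - {r} - {s}. G)" by (auto intro!: prod.cong)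
  also have "\<dots> = G ^ (m - 2)" using assms by (simp add: card_Diff_singleton_if numeral_2_eq_2)
  finally show ?thesis .
qed

lemma card_one:
  assumes "0 < G" "i < G * m"
  shows "card {\<phi>\<in>Phi G m. \<phi> (i div G) = i mod G} = G ^ (m - 1)"
proof -
  have r: "i div G < m" using assms by (simp add: less_mult_imp_div_less mult.commute)
  have e: "i mod G < G" using assms by simp
  have "{\<phi>\<in>Phi G m. \<phi> (i div G) = i mod G} = PiE {..<m} (\<lambda>a. if a = i div G then {i mod G} else {..<G})"
    unfolding Phi_def using r e
  proof (intro set_eqI iffI)
    fix x assume "x \<in> {\<phi> \<in> PiE {..<m} (\<lambda>_. {..<G}). \<phi> (i div G) = i mod G}"
    thus "x \<in> PiE {..<m} (\<lambda>a. if a = i div G then {i mod G} else {..<G})"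
      by (simp add: PiE_iff)
  next
    fix x assume "x \<in> PiE {..<m} (\<lambda>a. if a = i div G then {i mod G} else {..<G})"
    thus "x \<in> {\<phi> \<in> PiE {..<m} (\<lambda>_. {..<G}). \<phi> (i div G) = i mod G}"
    proof -
      have H: "\<forall>a\<in>{..<m}. x a \<in> (if a = i div G then {i mod G} else {..<G})"
        and X: "x \<in> extensional {..<m}" using \<open>x \<in> _\<close> unfolding PiE_iff by auto
      have 1: "x (i div G) = i mod G" using H r by force
      have 2: "\<forall>a\<in>{..<m}. x a \<in> {..<G}"
      proof
        fix a assume a: "a \<in> {..<m}"
        have ha: "x a \<in> (if a = i div G then {i mod G} else {..<G})" using H a by blast
        show "x a \<in> {..<G}" using ha e by (auto split: if_splits)
      qed
      show ?thesis using 1 2 X by (simp add: PiE_iff)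
    qed
  qed
  hence "card {\<phi>\<in>Phi G m. \<phi> (i div G) = i mod G} = (\<Prod>a<m. (if a = i div G then 1 else G))"
    by (simp add: card_PiE) (auto intro!: prod.cong)
  also have "\<dots> = G ^ (m - 1)" using prod_one_out[OF r] .
  finally show ?thesis .
qed

lemma card_two:
  assumes "0 < G" "i < G * m" "j < G * m" "i \<noteq> j"
  shows "card {\<phi>\<in>Phi G m. \<phi> (i div G) = i mod G \<and> \<phi> (j div G) = j mod G} \<le> G ^ (m - 2)"
proof (cases "i div G = j div G")
  case True
  have "i mod G \<noteq> j mod G" using True assms(4) by (metis div_mult_mod_eq)
  hence "{\<phi>\<in>Phi G m. \<phi> (i div G) = i mod G \<and> \<phi> (j div G) = j mod G} = {}" using True by auto
  thus ?thesis by (metis card.empty zero_le)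
next
  case False
  have r: "i div G < m" using assms by (simp add: less_mult_imp_div_less mult.commute)
  have s: "j div G < m" using assms by (simp add: less_mult_imp_div_less mult.commute)
  have "{\<phi>\<in>Phi G m. \<phi> (i div G) = i mod G \<and> \<phi> (j div G) = j mod G} =
     PiE {..<m} (\<lambda>a. if a = i div G then {i mod G} else if a = j div G then {j mod G} else {..<G})"
    unfolding Phi_def
  proof (intro set_eqI iffI)
    fix x assume "x \<in> {\<phi> \<in> PiE {..<m} (\<lambda>_. {..<G}). \<phi> (i div G) = i mod G \<and> \<phi> (j div G) = j mod G}"
    thus "x \<in> PiE {..<m} (\<lambda>a. if a = i div G then {i mod G} else if a = j div G then {j mod G} else {..<G})"
      by (simp add: PiE_iff)
  next
    fix x assume "x \<in> PiE {..<m} (\<lambda>a. if a = i div G then {i mod G} else if a = j div G then {j mod G} else {..<G})"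
    thus "x \<in> {\<phi> \<in> PiE {..<m} (\<lambda>_. {..<G}). \<phi> (i div G) = i mod G \<and> \<phi> (j div G) = j mod G}"
    proof -
      have H: "\<forall>a\<in>{..<m}. x a \<in> (if a = i div G then {i mod G} else if a = j div G then {j mod G} else {..<G})"
        and X: "x \<in> extensional {..<m}" using \<open>x \<in> _\<close> unfolding PiE_iff by auto
      have 1: "x (i div G) = i mod G" using H r by force
      have h3: "x (j div G) = j mod G" using H s False by force
      have 2: "\<forall>a\<in>{..<m}. x a \<in> {..<G}"
      proof
        fix a assume a: "a \<in> {..<m}"
        have ha: "x a \<in> (if a = i div G then {i mod G} else if a = j div G then {j mod G} else {..<G})" using H a by blast
        show "x a \<in> {..<G}" using ha assms(1) by (auto split: if_splits)
      qed
      show ?thesis using 1 h3 2 X by (simp add: PiE_iff)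
    qed
  qed
  hence "card {\<phi>\<in>Phi G m. \<phi> (i div G) = i mod G \<and> \<phi> (j div G) = j mod G}
     = (\<Prod>a<m. (if a = i div G then 1 else if a = j div G then 1 else G))"
    by (simp add: card_PiE) (auto intro!: prod.cong)
  also have "\<dots> = G ^ (m - 2)" using prod_two_out[OF r s False] .
  finally show ?thesis by simp
qed

lemma sum_ind: "finite A \<Longrightarrow> (\<Sum>x\<in>A. if P x then 1 else (0::real)) = real (card {x\<in>A. P x})"
  by (simp add: sum.If_cases Int_def)

lemma card_image_lb:
  fixes N :: nat and L :: "nat set" and h :: "nat \<Rightarrow> nat"
  assumes "L \<subseteq> {..<N}"
  shows "(\<Sum>i<N. (if i \<in> L then 1 else 0) - (\<Sum>j<N. if j \<noteq> i \<and> h j = h i \<and> i \<in> L \<and> j \<in> L then 1 else 0))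
          \<le> real (card (h ` L))"
proof -
  define S where "S = {i\<in>L. \<forall>j\<in>L. j \<noteq> i \<longrightarrow> h j \<noteq> h i}"
  have finL: "finite L" using finite_subset[OF assms] by simp
  have "inj_on h S" unfolding S_def inj_on_def by auto
  hence "card S = card (h ` S)" by (simp add: card_image)
  also have "\<dots> \<le> card (h ` L)" by (intro card_mono) (auto simp: S_def finL)
  finally have cS: "card S \<le> card (h ` L)" .
  have SN: "S \<subseteq> {..<N}" using assms by (auto simp: S_def)
  have "real (card S) = (\<Sum>i<N. if i \<in> S then 1 else 0)"
  proof -
    have "{x\<in>{..<N}. x \<in> S} = S" using SN by blast
    thus ?thesis using sum_ind[of "{..<N}" "\<lambda>i. i \<in> S"] by simp
  qed
  have hterm: "(if i \<in> L then 1 else 0) - (\<Sum>j<N. if j \<noteq> i \<and> h j = h i \<and> i \<in> L \<and> j \<in> L then 1 else (0::real))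
      \<le> (if i \<in> S then 1 else 0)" for i
  proof (cases "i \<in> S")
    case True
    hence "(\<Sum>j<N. if j \<noteq> i \<and> h j = h i \<and> i \<in> L \<and> j \<in> L then 1 else (0::real)) = 0"
      by (intro sum.neutral ballI) (auto simp: S_def)
    moreover have "i \<in> L" using True unfolding S_def by blast
    ultimately show ?thesis using True by simp
  next
    case False
    show ?thesis
    proof (cases "i \<in> L")
      case iL: True
      then obtain j where j: "j \<in> L" "j \<noteq> i" "h j = h i" using False by (auto simp: S_def)
      have jN: "j \<in> {..<N}" using j assms by auto
      have "1 \<le> (\<Sum>j'\<in>{j}. if j' \<noteq> i \<and> h j' = h i \<and> i \<in> L \<and> j' \<in> L then 1 else (0::real))"
        using j iL by simp
      also have "\<dots> \<le> (\<Sum>j<N. if j \<noteq> i \<and> h j = h i \<and> i \<in> L \<and> j \<in> L then 1 else (0::real))"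
        using jN by (intro sum_mono2) auto
      finally have X: "1 \<le> (\<Sum>j<N. if j \<noteq> i \<and> h j = h i \<and> i \<in> L \<and> j \<in> L then 1 else (0::real))" .
      have "(if i \<in> L then 1 else 0) = (1::real)" "(if i \<in> S then 1 else 0) = (0::real)" using iL False by simp_all
      thus ?thesis using X by linarith
    next
      case nL: False
      thus ?thesis using False by simp
    qed
  qed
  have "(\<Sum>i<N. (if i \<in> L then 1 else 0) - (\<Sum>j<N. if j \<noteq> i \<and> h j = h i \<and> i \<in> L \<and> j \<in> L then 1 else 0))
      \<le> (\<Sum>i<N. if i \<in> S then 1 else (0::real))" by (intro sum_mono hterm)
  also have "\<dots> = real (card S)" using \<open>real (card S) = _\<close> by simp
  also have "\<dots> \<le> real (card (h ` L))" using cS by simp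
  finally show ?thesis .
qed


lemma comb_main:
  fixes h :: "nat \<Rightarrow> nat" and k m G :: nat
  assumes G: "G = 2*k" and k: "0 < k" and m: "2 \<le> m"
  and cap: "\<And>i. i < G*m \<Longrightarrow> card {j. j < G*m \<and> h j = h i} \<le> k"
  shows "real (G^m) * real m / 2 \<le> (\<Sum>\<phi>\<in>Phi G m. real (card (h ` LL G m \<phi>)))"
proof -
  define N where "N = G*m"
  have G0: "0 < G" using G k by simp
  have LLsub: "LL G m \<phi> \<subseteq> {..<N}" for \<phi> by (auto simp: LL_def N_def)
  define a where "a i \<phi> = (if i \<in> LL G m \<phi> then 1 else (0::real))" for i \<phi>
  define c where "c i j \<phi> = (if j \<noteq> i \<and> h j = h i \<and> i \<in> LL G m \<phi> \<and> j \<in> LL G m \<phi> then 1 else (0::real))" for i j \<phi>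
  define P where "P = real (G ^ (m - 2))"
  have P0: "0 \<le> P" by (simp add: P_def)
  have step1: "(\<Sum>\<phi>\<in>Phi G m. \<Sum>i<N. a i \<phi> - (\<Sum>j<N. c i j \<phi>)) \<le> (\<Sum>\<phi>\<in>Phi G m. real (card (h ` LL G m \<phi>)))"
    unfolding a_def c_def by (intro sum_mono card_image_lb LLsub)
  have eq1: "(\<Sum>\<phi>\<in>Phi G m. \<Sum>i<N. a i \<phi> - (\<Sum>j<N. c i j \<phi>)) =
     (\<Sum>i<N. \<Sum>\<phi>\<in>Phi G m. a i \<phi>) - (\<Sum>i<N. \<Sum>j<N. \<Sum>\<phi>\<in>Phi G m. c i j \<phi>)"
  proof -
    have "(\<Sum>\<phi>\<in>Phi G m. \<Sum>i<N. a i \<phi> - (\<Sum>j<N. c i j \<phi>)) =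
       (\<Sum>\<phi>\<in>Phi G m. \<Sum>i<N. a i \<phi>) - (\<Sum>\<phi>\<in>Phi G m. \<Sum>i<N. \<Sum>j<N. c i j \<phi>)"
      by (simp only: sum_subtractf)
    also have "(\<Sum>\<phi>\<in>Phi G m. \<Sum>i<N. a i \<phi>) = (\<Sum>i<N. \<Sum>\<phi>\<in>Phi G m. a i \<phi>)"
      by (rule sum.swap)
    also have "(\<Sum>\<phi>\<in>Phi G m. \<Sum>i<N. \<Sum>j<N. c i j \<phi>) = (\<Sum>i<N. \<Sum>\<phi>\<in>Phi G m. \<Sum>j<N. c i j \<phi>)"
      by (rule sum.swap)
    also have "\<dots> = (\<Sum>i<N. \<Sum>j<N. \<Sum>\<phi>\<in>Phi G m. c i j \<phi>)"
      by (intro sum.cong refl sum.swap)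
    finally show ?thesis .
  qed
  have A: "(\<Sum>\<phi>\<in>Phi G m. a i \<phi>) = real G * P" if i: "i < N" for i
  proof -
    have "(\<Sum>\<phi>\<in>Phi G m. a i \<phi>) = real (card {\<phi>\<in>Phi G m. i \<in> LL G m \<phi>})"
      unfolding a_def by (rule sum_ind[OF finite_Phi])
    also have "{\<phi>\<in>Phi G m. i \<in> LL G m \<phi>} = {\<phi>\<in>Phi G m. \<phi> (i div G) = i mod G}"
      using i by (auto simp: LL_def N_def)
    also have "card \<dots> = G ^ (m - 1)" using card_one[OF G0, of i m] i by (simp add: N_def)
    also have "G ^ (m - 1) = G * G ^ (m - 2)"
    proof -
      have "m - 1 = Suc (m - 2)" using m by simp
      thus ?thesis by simp
    qed
    finally show ?thesis by (simp add: P_def)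
  qed
  have C: "(\<Sum>\<phi>\<in>Phi G m. c i j \<phi>) \<le> (if j \<noteq> i \<and> h j = h i then P else 0)" if i: "i < N" and j: "j < N" for i j
  proof (cases "j \<noteq> i \<and> h j = h i")
    case True
    have "(\<Sum>\<phi>\<in>Phi G m. c i j \<phi>) = real (card {\<phi>\<in>Phi G m. i \<in> LL G m \<phi> \<and> j \<in> LL G m \<phi>})"
      unfolding c_def using True sum_ind[OF finite_Phi, of "\<lambda>\<phi>. i \<in> LL G m \<phi> \<and> j \<in> LL G m \<phi>" G m] by simp
    also have "{\<phi>\<in>Phi G m. i \<in> LL G m \<phi> \<and> j \<in> LL G m \<phi>} = {\<phi>\<in>Phi G m. \<phi> (i div G) = i mod G \<and> \<phi> (j div G) = j mod G}"
      using i j by (auto simp: LL_def N_def)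
    also have "real (card \<dots>) \<le> P" unfolding P_def using card_two[OF G0, of i m j] i j True by (simp add: N_def)
    finally show ?thesis using True by simp
  next
    case False
    thus ?thesis unfolding c_def by auto
  qed
  have Cj: "(\<Sum>j<N. (if j \<noteq> i \<and> h j = h i then P else 0)) \<le> (real k - 1) * P" if i: "i < N" for i
  proof -
    have "(\<Sum>j<N. (if j \<noteq> i \<and> h j = h i then P else 0)) = (\<Sum>j<N. P * (if j \<noteq> i \<and> h j = h i then 1 else 0))"
      by (intro sum.cong) auto
    also have "\<dots> = P * (\<Sum>j<N. (if j \<noteq> i \<and> h j = h i then 1 else 0))" by (simp add: sum_distrib_left)
    also have "(\<Sum>j<N. (if j \<noteq> i \<and> h j = h i then 1 else (0::real))) = real (card {j\<in>{..<N}. j \<noteq> i \<and> h j = h i})"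
      by (rule sum_ind) simp
    finally have e1: "(\<Sum>j<N. (if j \<noteq> i \<and> h j = h i then P else 0)) = P * real (card {j\<in>{..<N}. j \<noteq> i \<and> h j = h i})" .
    have "{j\<in>{..<N}. j \<noteq> i \<and> h j = h i} = {j. j < G*m \<and> h j = h i} - {i}" by (auto simp: N_def)
    hence "card {j\<in>{..<N}. j \<noteq> i \<and> h j = h i} = card {j. j < G*m \<and> h j = h i} - 1" using i by (simp add: N_def)
    also have "\<dots> \<le> k - 1" using cap[of i] i by (simp add: N_def)
    finally have "real (card {j\<in>{..<N}. j \<noteq> i \<and> h j = h i}) \<le> real (k - 1)" by (simp only: of_nat_le_iff)
    also have "real (k - 1) = real k - 1" using k by (simp add: of_nat_diff)
    finally have "real (card {j\<in>{..<N}. j \<noteq> i \<and> h j = h i}) \<le> real k - 1" .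
    hence "P * real (card {j\<in>{..<N}. j \<noteq> i \<and> h j = h i}) \<le> P * (real k - 1)" using P0 by (intro mult_left_mono)
    thus ?thesis using e1 by (simp add: mult.commute)
  qed
  have B: "(\<Sum>i<N. \<Sum>j<N. \<Sum>\<phi>\<in>Phi G m. c i j \<phi>) \<le> real N * ((real k - 1) * P)"
  proof -
    have "(\<Sum>i<N. \<Sum>j<N. \<Sum>\<phi>\<in>Phi G m. c i j \<phi>) \<le> (\<Sum>i<N. \<Sum>j<N. (if j \<noteq> i \<and> h j = h i then P else 0))"
      by (intro sum_mono C) auto
    also have "\<dots> \<le> (\<Sum>i<N. (real k - 1) * P)" by (intro sum_mono Cj) auto
    also have "\<dots> = real N * ((real k - 1) * P)" by simp
    finally show ?thesis .
  qed
  have A': "(\<Sum>i<N. \<Sum>\<phi>\<in>Phi G m. a i \<phi>) = real N * (real G * P)" using A by simp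
  have pw: "real (G^m) = real G * real G * P"
  proof -
    have "m = Suc (Suc (m - 2))" using m by simp
    hence "G^m = G * (G * G^(m-2))" by (metis power_Suc)
    thus ?thesis unfolding P_def by simp
  qed
  have arith: "real N * (real G * P) - real N * ((real k - 1) * P) - (real G * real G * P) * real m / 2 = 2 * real k * real m * P"
    unfolding N_def G by (simp add: algebra_simps)
  have "0 \<le> 2 * real k * real m * P" using P0 by simp
  moreover have "real (G^m) * real m / 2 = real G * real G * P * real m / 2" using pw by simp
  ultimately show ?thesis using step1 eq1 A' B arith by linarith
qed

definition inst :: "real \<Rightarrow> nat \<Rightarrow> nat \<Rightarrow> (nat \<Rightarrow> nat) \<Rightarrow> item list" where
  "inst \<mu> k m \<phi> = map (\<lambda>i. (0, 1 / real k, if \<phi> (i div (2*k)) = i mod (2*k) then \<mu> else 1)) [0..<2*k*m]"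

definition J0 :: "nat \<Rightarrow> nat \<Rightarrow> item list" where
  "J0 k m = map (\<lambda>i. (0, 1 / real k, 1)) [0..<2*k*m]"

lemma length_inst[simp]: "length (inst \<mu> k m \<phi>) = 2*k*m" by (simp add: inst_def)
lemma length_J0[simp]: "length (J0 k m) = 2*k*m" by (simp add: J0_def)

lemma inst_nth:
  assumes "i < 2*k*m"
  shows "arr (inst \<mu> k m \<phi> ! i) = 0" "size_of (inst \<mu> k m \<phi> ! i) = 1 / real k"
    "dur (inst \<mu> k m \<phi> ! i) = (if i \<in> LL (2*k) m \<phi> then \<mu> else 1)"
  using assms by (simp_all add: inst_def arr_def size_of_def dur_def LL_def)

lemma J0_nth:
  assumes "i < 2*k*m"
  shows "arr (J0 k m ! i) = 0" "size_of (J0 k m ! i) = 1 / real k" "dur (J0 k m ! i) = 1"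
  using assms by (simp_all add: J0_def arr_def size_of_def dur_def)

lemma valid_inst: "1 \<le> \<mu> \<Longrightarrow> 0 < k \<Longrightarrow> valid_instance (inst \<mu> k m \<phi>)"
  unfolding valid_instance_def
proof
  fix x assume mu: "1 \<le> \<mu>" and k: "0 < k" and x: "x \<in> set (inst \<mu> k m \<phi>)"
  then obtain i where i: "i < 2*k*m" "x = inst \<mu> k m \<phi> ! i" by (auto simp: in_set_conv_nth)
  have "1 / real k \<le> 1" using k by simp
  thus "0 \<le> arr x \<and> 0 \<le> size_of x \<and> size_of x \<le> 1 \<and> 0 < dur x"
    using inst_nth[OF i(1)] i(2) mu by auto
qed

lemma valid_J0: "0 < k \<Longrightarrow> valid_instance (J0 k m)"
  unfolding valid_instance_def
proof
  fix x assume k: "0 < k" and x: "x \<in> set (J0 k m)"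
  then obtain i where i: "i < 2*k*m" "x = J0 k m ! i" by (auto simp: in_set_conv_nth)
  have "1 / real k \<le> 1" using k by simp
  thus "0 \<le> arr x \<and> 0 \<le> size_of x \<and> size_of x \<le> 1 \<and> 0 < dur x"
    using J0_nth[OF i(1)] i(2) by auto
qed

lemma active_inst:
  "active (inst \<mu> k m \<phi>) i t \<longleftrightarrow> i < 2*k*m \<and> 0 \<le> t \<and> t < (if i \<in> LL (2*k) m \<phi> then \<mu> else 1)"
  unfolding active_def by (auto simp: inst_nth)

lemma active_J0:
  "active (J0 k m) i t \<longleftrightarrow> i < 2*k*m \<and> 0 \<le> t \<and> t < 1"
  unfolding active_def by (auto simp: J0_nth)

lemma view_eq: "1 \<le> \<mu> \<Longrightarrow> view (inst \<mu> k m \<phi>) 0 = view (J0 k m) 0"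
  by (rule ext) (simp add: view_def inst_nth J0_nth)

lemma online_eq:
  assumes P: "det_online_alg P" and mu: "1 \<le> \<mu>" and k: "0 < k" and i: "i < 2*k*m"
  shows "P (inst \<mu> k m \<phi>) i 0 = P (J0 k m) i 0"
  using P unfolding det_online_alg_def
  using valid_inst[OF mu k] valid_J0[OF k] view_eq[OF mu] i by (auto simp: inst_nth)

lemma cap_gen:
  assumes P: "det_online_alg P" and V: "valid_instance I" and k: "0 < k"
    and sz: "\<And>i. i < length I \<Longrightarrow> size_of (I ! i) = 1 / real k"
  shows "card {i. active I i t \<and> P I i t = b} \<le> k"
proof -
  let ?S = "{i. active I i t \<and> P I i t = b}"
  have sub: "?S \<subseteq> {..<length I}" by (auto simp: active_def)
  hence fin: "finite ?S" using finite_subset[OF sub] by simp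
  have "(\<Sum>i\<in>?S. size_of (I ! i)) \<le> 1" using P V unfolding det_online_alg_def by blast
  moreover have "(\<Sum>i\<in>?S. size_of (I ! i)) = real (card ?S) / real k"
    using sub sz by (simp add: subset_iff)
  ultimately have "real (card ?S) \<le> real k" using k by (simp add: divide_le_eq)
  thus ?thesis by simp
qed

lemma moves_ge1:
  assumes "a \<le> t1" "t1 < t2" "t2 < a + d" "f t1 \<noteq> f t2"
  shows "1 \<le> moves f a d"
proof -
  define ts where "ts = (\<lambda>j::nat. if j = 0 then t1 else t2)"
  define X where "X = ennreal (real (card {j. j < (1::nat) \<and> f (ts j) \<noteq> f (ts (Suc j))}))"
  have "{j. j < (1::nat) \<and> f (ts j) \<noteq> f (ts (Suc j))} = {0}" using assms by (auto simp: ts_def)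
  hence X1: "X = 1" by (simp add: X_def)
  have C: "(\<forall>j \<le> 1. a \<le> ts j \<and> ts j < a + d) \<and> (\<forall>j < 1. ts j < ts (Suc j))"
    using assms by (auto simp: ts_def le_Suc_eq)
  have mem: "X \<in> {ennreal (real (card {j. j < k \<and> f (ts j) \<noteq> f (ts (Suc j))})) | ts k.
                        (\<forall>j \<le> k. a \<le> ts j \<and> ts j < a + d) \<and> (\<forall>j < k. ts j < ts (Suc j))}"
    unfolding mem_Collect_eq X_def using C by blast
  have "X \<le> moves f a d" unfolding moves_def by (rule Sup_upper[OF mem])
  thus ?thesis using X1 by simp
qed

lemma opt_at_le:
  assumes "\<forall>i. active I i t \<longrightarrow> f i < K0"
    "\<forall>b. (\<Sum>i \<in> {i. active I i t \<and> f i = b}. size_of (I ! i)) \<le> 1"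
  shows "opt_at I t \<le> K0"
  unfolding opt_at_def using assms by (intro Least_le) blast

lemma ennreal_add_le: "ennreal (x + y) \<le> ennreal x + ennreal y"
proof -
  have "ennreal (x + y) \<le> ennreal (max 0 x + max 0 y)" by (intro ennreal_leI) simp
  also have "\<dots> = ennreal (max 0 x) + ennreal (max 0 y)" by (intro ennreal_plus) auto
  also have "\<dots> = ennreal x + ennreal y" by (simp add: ennreal_max_0)
  finally show ?thesis .
qed

lemma card_fibers:
  assumes "finite A" "\<And>b. card {a\<in>A. f a = b} \<le> k"
  shows "card A \<le> card (f ` A) * k"
proof -
  have "A = (\<Union>b\<in>f ` A. {a\<in>A. f a = b})" by auto
  hence "card A = card (\<Union>b\<in>f ` A. {a\<in>A. f a = b})" by simp
  also have "\<dots> \<le> (\<Sum>b\<in>f ` A. card {a\<in>A. f a = b})" using assms(1) by (intro card_UN_le) simp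
  also have "\<dots> \<le> card (f ` A) * k" using assms(2) sum_bounded_above[of "f ` A" "\<lambda>b. card {a\<in>A. f a = b}" k] by simp
  finally show ?thesis .
qed

lemma card_div_fiber:
  fixes S :: "nat set"
  assumes k: "0 < k" and S: "\<forall>i\<in>S. i div k = b"
  shows "card S \<le> k"
proof -
  have "inj_on (\<lambda>i. i mod k) S"
  proof (rule inj_onI)
    fix x y assume "x \<in> S" "y \<in> S" "x mod k = y mod k"
    hence "x div k = y div k" "x mod k = y mod k" using S by auto
    thus "x = y" by (metis div_mult_mod_eq)
  qed
  moreover have "(\<lambda>i. i mod k) ` S \<subseteq> {..<k}" using k by auto
  ultimately show ?thesis using card_inj_on_le[of "\<lambda>i. i mod k" S "{..<k}"] by simp
qed

lemma sum_size_inst: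
  assumes "S \<subseteq> {..<2*k*m}"
  shows "(\<Sum>i\<in>S. size_of (inst \<mu> k m \<phi> ! i)) = real (card S) / real k"
proof -
  have "(\<Sum>i\<in>S. size_of (inst \<mu> k m \<phi> ! i)) = (\<Sum>i\<in>S. 1 / real k)"
    using assms by (intro sum.cong) (auto simp: inst_nth)
  thus ?thesis by simp
qed

lemma integral_two:
  assumes "1 \<le> \<mu>"
  shows "(\<integral>\<^sup>+t. a * indicator {0..<1} t + b * indicator {1..<\<mu>} t \<partial>lborel) = a + b * ennreal (\<mu> - 1)"
proof -
  have "(\<integral>\<^sup>+t. a * indicator {0..<1} t + b * indicator {1..<\<mu>} t \<partial>lborel)
      = (\<integral>\<^sup>+t. a * indicator {0..<(1::real)} t \<partial>lborel) + (\<integral>\<^sup>+t. b * indicator {1..<\<mu>} t \<partial>lborel)"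
    by (intro nn_integral_add) auto
  also have "\<dots> = a * emeasure lborel {0..<(1::real)} + b * emeasure lborel {1..<\<mu>}"
    using nn_integral_cmult_indicator[of "{0..<(1::real)}" lborel a]
      nn_integral_cmult_indicator[of "{1..<\<mu>}" lborel b] by simp
  also have "\<dots> = a + b * ennreal (\<mu> - 1)" using assms by simp
  finally show ?thesis .
qed

lemma OPT_bound:
  assumes mu: "1 \<le> \<mu>" and k: "0 < k" and mr: "m = k * r"
  shows "OPT (inst \<mu> k m \<phi>) \<le> ennreal (real (2*m)) + ennreal (real r) * ennreal (\<mu> - 1)"
proof -
  let ?I = "inst \<mu> k m \<phi>"
  let ?L = "LL (2*k) m \<phi>"
  have pt: "ennreal (real (opt_at ?I t)) \<le> ennreal (real (2*m)) * indicator {0..<1} t + ennreal (real r) * indicator {1..<\<mu>} t" for t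
  proof (cases "t \<in> {0..<1}")
    case True
    have "opt_at ?I t \<le> 2*m"
    proof (rule opt_at_le[where f="\<lambda>i. i div k"])
      show "\<forall>i. active ?I i t \<longrightarrow> i div k < 2 * m"
        using k by (auto simp: active_inst less_mult_imp_div_less mult.commute mult.left_commute)
      show "\<forall>b. (\<Sum>i\<in>{i. active ?I i t \<and> i div k = b}. size_of (?I ! i)) \<le> 1"
      proof
        fix b
        have sub: "{i. active ?I i t \<and> i div k = b} \<subseteq> {..<2*k*m}" by (auto simp: active_inst)
        have "card {i. active ?I i t \<and> i div k = b} \<le> k" using k by (intro card_div_fiber[where b=b]) auto
        thus "(\<Sum>i\<in>{i. active ?I i t \<and> i div k = b}. size_of (?I ! i)) \<le> 1"
          using sum_size_inst[OF sub] k by (simp add: divide_le_eq)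
      qed
    qed
    thus ?thesis using True by simp
  next
    case F1: False
    show ?thesis
    proof (cases "t \<in> {1..<\<mu>}")
      case True
      have "opt_at ?I t \<le> r"
      proof (rule opt_at_le[where f="\<lambda>i. (i div (2*k)) div k"])
        show "\<forall>i. active ?I i t \<longrightarrow> (i div (2*k)) div k < r"
        proof (intro allI impI)
          fix i assume "active ?I i t"
          hence "i < 2*k*m" by (simp add: active_inst)
          hence "i div (2*k) < m" by (simp add: less_mult_imp_div_less mult.commute)
          hence "i div (2*k) < r * k" using mr by (simp add: mult.commute)
          thus "(i div (2*k)) div k < r" by (simp add: less_mult_imp_div_less)
        qed
        show "\<forall>b. (\<Sum>i\<in>{i. active ?I i t \<and> (i div (2*k)) div k = b}. size_of (?I ! i)) \<le> 1"
        proof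
          fix b
          let ?S = "{i. active ?I i t \<and> (i div (2*k)) div k = b}"
          have sub: "?S \<subseteq> {..<2*k*m}" by (auto simp: active_inst)
          have SL: "?S \<subseteq> ?L" using True F1 by (auto simp: active_inst split: if_splits)
          have inj: "inj_on (\<lambda>i. i div (2*k)) ?S"
          proof (rule inj_onI)
            fix x y assume "x \<in> ?S" "y \<in> ?S" and eq: "x div (2*k) = y div (2*k)"
            hence "x \<in> ?L" "y \<in> ?L" using SL by auto
            hence "x mod (2*k) = y mod (2*k)" using eq by (simp add: LL_def)
            thus "x = y" using eq by (metis div_mult_mod_eq)
          qed
          have "card ((\<lambda>i. i div (2*k)) ` ?S) \<le> k" using k by (intro card_div_fiber[where b=b]) auto
          hence "card ?S \<le> k" using card_image[OF inj] by simp
          thus "(\<Sum>i\<in>?S. size_of (?I ! i)) \<le> 1"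
            using sum_size_inst[OF sub] k by (simp add: divide_le_eq)
        qed
      qed
      thus ?thesis using True F1 by simp
    next
      case False
      have "\<not> active ?I i t" for i
        using F1 False mu by (auto simp: active_inst split: if_splits)
      hence "opt_at ?I t \<le> 0" by (intro opt_at_le[where f="\<lambda>i. 0"]) auto
      thus ?thesis by simp
    qed
  qed
  have "OPT ?I \<le> (\<integral>\<^sup>+t. ennreal (real (2*m)) * indicator {0..<1} t + ennreal (real r) * indicator {1..<\<mu>} t \<partial>lborel)"
    unfolding OPT_def by (intro nn_integral_mono pt)
  also have "\<dots> = ennreal (real (2*m)) + ennreal (real r) * ennreal (\<mu> - 1)" by (rule integral_two[OF mu])
  finally show ?thesis .
qed

lemma dur_ratio:
  assumes mu: "1 \<le> \<mu>" and k: "0 < k" and m: "0 < m" and phi: "\<phi> \<in> Phi (2*k) m"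
  shows "has_dur_ratio \<mu> (inst \<mu> k m \<phi>)"
proof -
  let ?I = "inst \<mu> k m \<phi>"
  have p0: "\<phi> 0 < 2*k" using phi m by (auto simp: Phi_def PiE_iff)
  have N: "2*k \<le> 2*k*m" using m by simp
  have sub: "dur ` set ?I \<subseteq> {1, \<mu>}"
  proof
    fix y assume "y \<in> dur ` set ?I"
    then obtain i where "i < 2*k*m" "y = dur (?I ! i)" by (auto simp: in_set_conv_nth)
    thus "y \<in> {1, \<mu>}" by (simp add: inst_nth)
  qed
  define i0 where "i0 = \<phi> 0"
  have i0: "i0 < 2*k*m" "i0 \<in> LL (2*k) m \<phi>" using p0 N by (auto simp: i0_def LL_def intro: less_le_trans)
  define i1 where "i1 = (if \<phi> 0 = 0 then 1 else (0::nat))"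
  have i1': "i1 < 2*k" using k by (simp add: i1_def)
  have i1: "i1 < 2*k*m" "i1 \<notin> LL (2*k) m \<phi>" using i1' N by (auto simp: i1_def LL_def intro: less_le_trans)
  have "\<mu> \<in> dur ` set ?I"
  proof -
    have "?I ! i0 \<in> set ?I" using i0 by simp
    moreover have "dur (?I ! i0) = \<mu>" using i0 by (simp add: inst_nth)
    ultimately show ?thesis by force
  qed
  moreover have "1 \<in> dur ` set ?I"
  proof -
    have "?I ! i1 \<in> set ?I" using i1 by simp
    moreover have "dur (?I ! i1) = 1" using i1 by (simp add: inst_nth)
    ultimately show ?thesis by force
  qed
  ultimately have eq: "dur ` set ?I = {1, \<mu>}" using sub by blast
  have ne: "?I \<noteq> []" using i0 by (metis length_inst less_nat_zero_code list.size(3))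
  show ?thesis unfolding has_dur_ratio_def eq using ne mu by (simp add: max_def min_def)
qed

lemma cost_bound:
  assumes P: "det_online_alg P" and mu: "1 \<le> \<mu>" and k: "0 < k"
  shows "ennreal (real (2*m) + (\<mu> - 1) * real (card ((\<lambda>i. P (J0 k m) i 0) ` LL (2*k) m \<phi>)))
     \<le> cost P (inst \<mu> k m \<phi>) + ennreal (\<mu> - 1) * migrations P (inst \<mu> k m \<phi>)"
proof -
  define I where "I = inst \<mu> k m \<phi>"
  define N where "N = 2*k*m"
  define L where "L = LL (2*k) m \<phi>"
  define h0 where "h0 = (\<lambda>i. P I i 0)"
  define Mv where "Mv = {i\<in>L. \<exists>s. 1 \<le> s \<and> s < \<mu> \<and> P I i s \<noteq> P I i 0}"
  define D where "D = card (h0 ` L)"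
  define cM where "cM = card Mv"
  have LN: "L \<subseteq> {..<N}" by (auto simp: L_def LL_def N_def)
  have finL: "finite L" using finite_subset[OF LN] by simp
  have MvL: "Mv \<subseteq> L" by (auto simp: Mv_def)
  have finMv: "finite Mv" using finite_subset[OF MvL finL] .
  have VI: "valid_instance I" unfolding I_def by (rule valid_inst[OF mu k])
  have Deq: "card ((\<lambda>i. P (J0 k m) i 0) ` LL (2*k) m \<phi>) = D"
  proof -
    have "(\<lambda>i. P (J0 k m) i 0) ` L = h0 ` L"
      using LN online_eq[OF P mu k] by (intro image_cong refl) (auto simp: h0_def I_def N_def)
    thus ?thesis by (simp add: D_def L_def)
  qed
  have Bt: "{P I i t |i. active I i t} = (\<lambda>i. P I i t) ` {i. active I i t}" for t by auto
  have ph1: "2*m \<le> card {P I i t |i. active I i t}" if t: "t \<in> {0..<1}" for t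
  proof -
    have act: "{i. active I i t} = {..<N}" using t mu by (auto simp: I_def active_inst N_def)
    have fib: "card {a\<in>{..<N}. P I a t = b} \<le> k" for b
    proof -
      have "{a\<in>{..<N}. P I a t = b} = {i. active I i t \<and> P I i t = b}" using act by auto
      also have "card \<dots> \<le> k" using cap_gen[OF P VI k] by (simp add: I_def inst_nth)
      finally show ?thesis .
    qed
    have "N \<le> card ((\<lambda>i. P I i t) ` {..<N}) * k" using card_fibers[of "{..<N}", OF _ fib] by simp
    hence "2*m*k \<le> card ((\<lambda>i. P I i t) ` {..<N}) * k" by (simp add: N_def mult.commute mult.left_commute)
    hence "2*m \<le> card ((\<lambda>i. P I i t) ` {..<N})" using k by simp
    thus ?thesis using act Bt by simp
  qed
  have ph2: "D \<le> card {P I i t |i. active I i t} + cM" if t: "t \<in> {1..<\<mu>}" for t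
  proof -
    have act: "{i. active I i t} = L" using t by (auto simp: I_def active_inst L_def LL_def)
    have "h0 ` L \<subseteq> (\<lambda>i. P I i t) ` L \<union> h0 ` Mv"
    proof
      fix y assume "y \<in> h0 ` L"
      then obtain i where i: "i \<in> L" "y = h0 i" by auto
      show "y \<in> (\<lambda>i. P I i t) ` L \<union> h0 ` Mv"
      proof (cases "P I i t = P I i 0")
        case True
        hence "y = P I i t" using i by (simp add: h0_def)
        thus ?thesis using i(1) by blast
      next
        case False
        hence "i \<in> Mv" using i t by (auto simp: Mv_def)
        thus ?thesis using i by auto
      qed
    qed
    hence "D \<le> card ((\<lambda>i. P I i t) ` L \<union> h0 ` Mv)" unfolding D_def
      using finL finMv by (intro card_mono) auto
    also have "\<dots> \<le> card ((\<lambda>i. P I i t) ` L) + card (h0 ` Mv)" by (rule card_Un_le)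
    also have "\<dots> \<le> card ((\<lambda>i. P I i t) ` L) + cM" unfolding cM_def using card_image_le[OF finMv] by simp
    finally show ?thesis using act Bt by simp
  qed
  define f where "f t = ennreal (real (2*m)) * indicator {0..<1} t + ennreal (real D - real cM) * indicator {1..<\<mu>} t" for t
  have fle: "f t \<le> ennreal (real (card {P I i t |i. active I i t}))" for t
  proof (cases "t \<in> {0..<1}")
    case True
    hence "t \<notin> {1..<\<mu>}" by auto
    thus ?thesis using True ph1[OF True] by (simp add: f_def)
  next
    case F: False
    show ?thesis
    proof (cases "t \<in> {1..<\<mu>}")
      case True
      have "real D - real cM \<le> real (card {P I i t |i. active I i t})" using ph2[OF True] by linarith
      thus ?thesis using True F by (simp add: f_def ennreal_leI)
    next
      case False thus ?thesis using F by (simp add: f_def)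
    qed
  qed
  have costlb: "ennreal (real (2*m)) + ennreal (real D - real cM) * ennreal (\<mu> - 1) \<le> cost P I"
  proof -
    have "ennreal (real (2*m)) + ennreal (real D - real cM) * ennreal (\<mu> - 1) = (\<integral>\<^sup>+t. f t \<partial>lborel)"
      unfolding f_def by (rule integral_two[OF mu, symmetric])
    also have "\<dots> \<le> cost P I" unfolding cost_def by (intro nn_integral_mono fle)
    finally show ?thesis .
  qed
  have miglb: "ennreal (real cM) \<le> migrations P I"
  proof -
    have "ennreal (real cM) = (\<Sum>i\<in>Mv. (1::ennreal))" by (simp add: cM_def ennreal_of_nat_eq_real_of_nat)
    also have "\<dots> \<le> (\<Sum>i\<in>Mv. moves (P I i) (arr (I ! i)) (dur (I ! i)))"
    proof (intro sum_mono)
      fix i assume iM: "i \<in> Mv"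
      then obtain s where s: "1 \<le> s" "s < \<mu>" "P I i s \<noteq> P I i 0" by (auto simp: Mv_def)
      have iL: "i \<in> L" using iM MvL by auto
      hence iN: "i < 2*k*m" using LN by (auto simp: N_def)
      have "arr (I ! i) = 0" "dur (I ! i) = \<mu>" using iL iN by (auto simp: I_def inst_nth L_def)
      thus "1 \<le> moves (P I i) (arr (I ! i)) (dur (I ! i))"
        using s by (intro moves_ge1[of _ 0 s]) auto
    qed
    also have "\<dots> \<le> (\<Sum>i<length I. moves (P I i) (arr (I ! i)) (dur (I ! i)))"
      using MvL LN by (intro sum_mono2) (auto simp: I_def N_def)
    finally show ?thesis unfolding migrations_def .
  qed
  have mu1: "0 \<le> \<mu> - 1" using mu by simp
  have "ennreal (real (2*m) + (\<mu> - 1) * real D)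
      = ennreal (real (2*m) + ((real D - real cM) * (\<mu> - 1) + (\<mu> - 1) * real cM))"
    by (simp add: algebra_simps)
  also have "\<dots> \<le> ennreal (real (2*m)) + (ennreal ((real D - real cM) * (\<mu> - 1)) + ennreal ((\<mu> - 1) * real cM))"
    by (intro order.trans[OF ennreal_add_le] add_mono order.refl ennreal_add_le)
  also have "\<dots> = ennreal (real (2*m)) + ennreal (real D - real cM) * ennreal (\<mu> - 1) + ennreal (\<mu> - 1) * ennreal (real cM)"
    using mu1 by (simp add: ennreal_mult'' ennreal_mult add.assoc)
  also have "\<dots> \<le> cost P I + ennreal (\<mu> - 1) * migrations P I"
    by (intro add_mono costlb mult_left_mono miglb) auto
  finally show ?thesis using Deq by (simp add: I_def)
qed

lemma lin_aux:
  fixes a x k :: real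
  assumes "x \<le> (a - k) / 4" "0 \<le> k"
  shows "a / 3 + x / 6 \<le> 2 * k + 3 * (a - k) / 8"
proof -
  have "x / 6 \<le> a / 24 - k / 24" using assms(1) by simp
  moreover have "3 * (a - k) / 8 = 3 * a / 8 - 3 * k / 8" by simp
  ultimately show ?thesis using assms(2) by linarith
qed

lemma param_ineq:
  fixes \<mu> k r :: real
  assumes mu: "1 \<le> \<mu>" and k: "4 * \<mu> \<le> k" and r: "0 \<le> r"
  shows "\<mu> / 6 * (2 * (k * r) + r * (\<mu> - 1)) \<le> 2 * (k * r) + 3 * (\<mu> - 1) * (k * r) / 8"
proof -
  have h1: "\<mu> * (\<mu> - 1) \<le> (k / 4) * (\<mu> - 1)" using mu k by (intro mult_right_mono) auto
  have "\<mu> * k / 3 + \<mu> * (\<mu> - 1) / 6 \<le> 2 * k + 3 * (\<mu> - 1) * k / 8"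
  proof -
    have e1: "\<mu> * (\<mu> - 1) = \<mu> * \<mu> - \<mu>" by (simp add: algebra_simps)
    have e2: "(k / 4) * (\<mu> - 1) = (\<mu> * k - k) / 4" by (simp add: algebra_simps)
    have e3: "3 * (\<mu> - 1) * k / 8 = 3 * (\<mu> * k - k) / 8" by (simp add: algebra_simps)
    have e4: "\<mu> * (\<mu> - 1) / 6 = (\<mu> * \<mu> - \<mu>) / 6" by (simp add: algebra_simps)
    have "\<mu> * k / 3 + (\<mu> * \<mu> - \<mu>) / 6 \<le> 2 * k + 3 * (\<mu> * k - k) / 8"
      using h1 mu k unfolding e1 e2 by (intro lin_aux) auto
    thus ?thesis unfolding e3 e4 .
  qed
  hence "r * (\<mu> * k / 3 + \<mu> * (\<mu> - 1) / 6) \<le> r * (2 * k + 3 * (\<mu> - 1) * k / 8)"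
    using r by (intro mult_left_mono)
  moreover have "\<mu> / 6 * (2 * (k * r) + r * (\<mu> - 1)) = r * (\<mu> * k / 3 + \<mu> * (\<mu> - 1) / 6)"
    by (simp add: field_simps)
  moreover have "2 * (k * r) + 3 * (\<mu> - 1) * (k * r) / 8 = r * (2 * k + 3 * (\<mu> - 1) * k / 8)"
    by (simp add: field_simps)
  ultimately show ?thesis by simp
qed

theorem corollary7:
  fixes \<mu> :: real and M :: "'w measure" and A :: "'w \<Rightarrow> packing_alg" and g :: "nat \<Rightarrow> real"
  assumes "1 \<le> \<mu>"
    and "randomized_online_alg M A"
    and "g \<in> o(\<lambda>n. real n)"
    and "\<forall>I. valid_instance I \<and> has_dur_ratio \<mu> I \<longrightarrow>
           expected_migrations M A I \<le> ennreal (g (length I))"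
  shows "\<forall>\<beta> :: real. \<beta> < \<mu> / 6 \<longrightarrow>
           (\<exists>I. valid_instance I \<and> has_dur_ratio \<mu> I \<and>
                expected_cost M A I > ennreal \<beta> * OPT I)"
proof (intro allI impI)
  fix \<beta> :: real assume hb: "\<beta> < \<mu> / 6"
  have mu: "1 \<le> \<mu>" using assms(1) .
  have PS: "prob_space M" using assms(2) unfolding randomized_online_alg_def by blast
  have DA: "\<And>w. w \<in> space M \<Longrightarrow> det_online_alg (A w)" using assms(2) unfolding randomized_online_alg_def by blast
  have measC: "\<And>I. valid_instance I \<Longrightarrow> (\<lambda>w. cost (A w) I) \<in> borel_measurable M"
    using assms(2) unfolding randomized_online_alg_def by blast
  have measM: "\<And>I. valid_instance I \<Longrightarrow> (\<lambda>w. migrations (A w) I) \<in> borel_measurable M"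
    using assms(2) unfolding randomized_online_alg_def by blast
  define k :: nat where "k = nat \<lceil>4 * \<mu>\<rceil>"
  have k4: "4 * \<mu> \<le> real k" unfolding k_def by (rule real_nat_ceiling_ge)
  have k0: "0 < k" using k4 mu by linarith
  define \<epsilon> where "\<epsilon> = 1 / (16 * real k)"
  have eps0: "0 < \<epsilon>" using k0 by (simp add: \<epsilon>_def)
  have "eventually (\<lambda>n. norm (g n) \<le> \<epsilon> * norm (real n)) at_top"
    using landau_o.smallD[OF assms(3) eps0] .
  then obtain N0 where N0: "\<And>n. n \<ge> N0 \<Longrightarrow> norm (g n) \<le> \<epsilon> * norm (real n)"
    by (auto simp: eventually_at_top_linorder)
  define r where "r = N0 + 1"
  define m where "m = k * r"
  define N where "N = 2 * k * m"
  define \<Phi> where "\<Phi> = Phi (2*k) m"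
  define B where "B = real (2*m) + real r * (\<mu> - 1)"
  define \<beta>' where "\<beta>' = max 0 \<beta>"
  have r1: "1 \<le> r" by (simp add: r_def)
  have k1: "1 \<le> k" using k0 by simp
  have km: "k \<le> m" using r1 by (simp add: m_def)
  have k4': "4 \<le> k" using k4 mu by linarith
  have m2: "2 \<le> m" using km k4' by linarith
  have m0: "0 < m" using m2 by simp
  have "r \<le> m" using k1 unfolding m_def by simp
  moreover have "m \<le> N" using k1 unfolding N_def by simp
  ultimately have NN0: "N0 \<le> N" unfolding r_def by linarith
  have gN: "ennreal (g N) \<le> ennreal (real m / 8)"
  proof -
    have "g N \<le> \<epsilon> * real N" using N0[OF NN0] by simp
    also have "\<epsilon> * real N = real m / 8" using k0 by (simp add: \<epsilon>_def N_def field_simps)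
    finally show ?thesis by (rule ennreal_leI)
  qed
  have B0: "0 \<le> B" using mu by (simp add: B_def)
  have Bpos: "0 < B" using mu m0 by (simp add: B_def add_pos_nonneg)
  have beta'0: "0 \<le> \<beta>'" by (simp add: \<beta>'_def)
  show "\<exists>I. valid_instance I \<and> has_dur_ratio \<mu> I \<and> expected_cost M A I > ennreal \<beta> * OPT I"
  proof (rule ccontr)
    assume neg: "\<not> (\<exists>I. valid_instance I \<and> has_dur_ratio \<mu> I \<and> expected_cost M A I > ennreal \<beta> * OPT I)"
    have VI: "valid_instance (inst \<mu> k m \<phi>)" for \<phi> by (rule valid_inst[OF mu k0])
    have DR: "has_dur_ratio \<mu> (inst \<mu> k m \<phi>)" if "\<phi> \<in> \<Phi>" for \<phi>
      using dur_ratio[OF mu k0 m0] that by (simp add: \<Phi>_def)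
    have H: "expected_cost M A (inst \<mu> k m \<phi>) \<le> ennreal (\<beta>' * B)" if phi: "\<phi> \<in> \<Phi>" for \<phi>
    proof -
      have "\<not> expected_cost M A (inst \<mu> k m \<phi>) > ennreal \<beta> * OPT (inst \<mu> k m \<phi>)"
        using neg VI DR[OF phi] by blast
      hence "expected_cost M A (inst \<mu> k m \<phi>) \<le> ennreal \<beta> * OPT (inst \<mu> k m \<phi>)" by simp
      also have "\<dots> \<le> ennreal \<beta> * ennreal B"
      proof -
        have "OPT (inst \<mu> k m \<phi>) \<le> ennreal (real (2*m)) + ennreal (real r) * ennreal (\<mu> - 1)"
          by (rule OPT_bound[OF mu k0 m_def])
        also have "\<dots> = ennreal B" using mu by (simp add: B_def ennreal_plus ennreal_mult)
        finally show ?thesis by (rule mult_left_mono) simp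
      qed
      also have "ennreal \<beta> = ennreal \<beta>'" by (simp add: \<beta>'_def ennreal_max_0)
      also have "ennreal \<beta>' * ennreal B = ennreal (\<beta>' * B)" using beta'0 B0 by (simp add: ennreal_mult)
      finally show ?thesis .
    qed
    have Hm: "expected_migrations M A (inst \<mu> k m \<phi>) \<le> ennreal (real m / 8)" if phi: "\<phi> \<in> \<Phi>" for \<phi>
    proof -
      have "expected_migrations M A (inst \<mu> k m \<phi>) \<le> ennreal (g (length (inst \<mu> k m \<phi>)))"
        using assms(4) VI DR[OF phi] by blast
      also have "length (inst \<mu> k m \<phi>) = N" by (simp add: N_def)
      finally show ?thesis using gN by (rule order.trans)
    qed
    define K where "K = real (card \<Phi>)"
    have K: "K = real ((2*k)^m)" by (simp add: K_def \<Phi>_def card_Phi)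
    have Kpos: "0 < K" using k0 by (simp add: K)
    have finPhi: "finite \<Phi>" by (simp add: \<Phi>_def finite_Phi)
    define C where "C = K * real (2*m) + (\<mu> - 1) * (K * real m / 2)"
    have pw: "ennreal C \<le> (\<Sum>\<phi>\<in>\<Phi>. cost (A w) (inst \<mu> k m \<phi>) + ennreal (\<mu> - 1) * migrations (A w) (inst \<mu> k m \<phi>))"
      if w: "w \<in> space M" for w
    proof -
      let ?P = "A w"
      let ?h = "\<lambda>i. ?P (J0 k m) i 0"
      let ?D = "\<lambda>\<phi>. real (card (?h ` LL (2*k) m \<phi>))"
      have P: "det_online_alg ?P" using DA[OF w] .
      have cap: "card {j. j < 2*k*m \<and> ?h j = ?h i} \<le> k" if "i < 2*k*m" for i
      proof -
        have "{j. j < 2*k*m \<and> ?h j = ?h i} = {j. active (J0 k m) j 0 \<and> ?P (J0 k m) j 0 = ?h i}"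
          by (auto simp: active_J0)
        also have "card \<dots> \<le> k" using cap_gen[OF P valid_J0[OF k0] k0] by (simp add: J0_nth)
        finally show ?thesis .
      qed
      have comb: "real ((2*k)^m) * real m / 2 \<le> (\<Sum>\<phi>\<in>\<Phi>. ?D \<phi>)"
        unfolding \<Phi>_def using comb_main[of "2*k" k m ?h] k0 m2 cap by (simp add: mult.assoc)
      have "C \<le> (\<Sum>\<phi>\<in>\<Phi>. real (2*m) + (\<mu> - 1) * ?D \<phi>)"
      proof -
        have "(\<Sum>\<phi>\<in>\<Phi>. real (2*m) + (\<mu> - 1) * ?D \<phi>) = K * real (2*m) + (\<mu> - 1) * (\<Sum>\<phi>\<in>\<Phi>. ?D \<phi>)"
          by (simp add: sum.distrib sum_distrib_left K_def)
        moreover have "(\<mu> - 1) * (K * real m / 2) \<le> (\<mu> - 1) * (\<Sum>\<phi>\<in>\<Phi>. ?D \<phi>)"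
          using comb mu K by (intro mult_left_mono) auto
        ultimately show ?thesis by (simp add: C_def)
      qed
      hence "ennreal C \<le> ennreal (\<Sum>\<phi>\<in>\<Phi>. real (2*m) + (\<mu> - 1) * ?D \<phi>)" by (rule ennreal_leI)
      also have "\<dots> = (\<Sum>\<phi>\<in>\<Phi>. ennreal (real (2*m) + (\<mu> - 1) * ?D \<phi>))"
        using mu by (intro sum_ennreal[symmetric]) simp
      also have "\<dots> \<le> (\<Sum>\<phi>\<in>\<Phi>. cost ?P (inst \<mu> k m \<phi>) + ennreal (\<mu> - 1) * migrations ?P (inst \<mu> k m \<phi>))"
        by (intro sum_mono cost_bound[OF P mu k0])
      finally show ?thesis .
    qed
    have "ennreal C = (\<integral>\<^sup>+w. ennreal C \<partial>M)"
      using prob_space.emeasure_space_1[OF PS] by (simp add: nn_integral_const)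
    also have "\<dots> \<le> (\<integral>\<^sup>+w. (\<Sum>\<phi>\<in>\<Phi>. cost (A w) (inst \<mu> k m \<phi>) + ennreal (\<mu> - 1) * migrations (A w) (inst \<mu> k m \<phi>)) \<partial>M)"
      by (intro nn_integral_mono pw)
    also have "\<dots> = (\<Sum>\<phi>\<in>\<Phi>. (\<integral>\<^sup>+w. cost (A w) (inst \<mu> k m \<phi>) + ennreal (\<mu> - 1) * migrations (A w) (inst \<mu> k m \<phi>) \<partial>M))"
      by (intro nn_integral_sum) (use measC measM VI in auto)
    also have "\<dots> = (\<Sum>\<phi>\<in>\<Phi>. expected_cost M A (inst \<mu> k m \<phi>) + ennreal (\<mu> - 1) * expected_migrations M A (inst \<mu> k m \<phi>))"
    proof (intro sum.cong refl)
      fix \<phi> assume "\<phi> \<in> \<Phi>"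
      have "(\<integral>\<^sup>+w. cost (A w) (inst \<mu> k m \<phi>) + ennreal (\<mu> - 1) * migrations (A w) (inst \<mu> k m \<phi>) \<partial>M)
          = (\<integral>\<^sup>+w. cost (A w) (inst \<mu> k m \<phi>) \<partial>M) + (\<integral>\<^sup>+w. ennreal (\<mu> - 1) * migrations (A w) (inst \<mu> k m \<phi>) \<partial>M)"
        by (intro nn_integral_add) (use measC measM VI in auto)
      also have "(\<integral>\<^sup>+w. ennreal (\<mu> - 1) * migrations (A w) (inst \<mu> k m \<phi>) \<partial>M) = ennreal (\<mu> - 1) * (\<integral>\<^sup>+w. migrations (A w) (inst \<mu> k m \<phi>) \<partial>M)"
        by (intro nn_integral_cmult) (use measM VI in auto)
      finally show "(\<integral>\<^sup>+w. cost (A w) (inst \<mu> k m \<phi>) + ennreal (\<mu> - 1) * migrations (A w) (inst \<mu> k m \<phi>) \<partial>M)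
          = expected_cost M A (inst \<mu> k m \<phi>) + ennreal (\<mu> - 1) * expected_migrations M A (inst \<mu> k m \<phi>)"
        by (simp add: expected_cost_def expected_migrations_def)
    qed
    also have "\<dots> \<le> (\<Sum>\<phi>\<in>\<Phi>. ennreal (\<beta>' * B) + ennreal (\<mu> - 1) * ennreal (real m / 8))"
      by (intro sum_mono add_mono H mult_left_mono Hm) auto
    also have "\<dots> = ennreal (K * (\<beta>' * B + (\<mu> - 1) * (real m / 8)))"
    proof -
      have "(\<Sum>\<phi>\<in>\<Phi>. ennreal (\<beta>' * B) + ennreal (\<mu> - 1) * ennreal (real m / 8))
          = (\<Sum>\<phi>\<in>\<Phi>. ennreal (\<beta>' * B + (\<mu> - 1) * (real m / 8)))"
      proof (intro sum.cong refl)
        fix \<phi>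
        have e1: "ennreal (\<mu> - 1) * ennreal (real m / 8) = ennreal ((\<mu> - 1) * (real m / 8))"
          using mu by (intro ennreal_mult[symmetric]) auto
        have e2: "ennreal (\<beta>' * B) + ennreal ((\<mu> - 1) * (real m / 8)) = ennreal (\<beta>' * B + (\<mu> - 1) * (real m / 8))"
          using beta'0 B0 mu by (intro ennreal_plus[symmetric]) auto
        show "ennreal (\<beta>' * B) + ennreal (\<mu> - 1) * ennreal (real m / 8) = ennreal (\<beta>' * B + (\<mu> - 1) * (real m / 8))"
          using e1 e2 by simp
      qed
      also have "\<dots> = ennreal (K * (\<beta>' * B + (\<mu> - 1) * (real m / 8)))"
        using beta'0 B0 mu by (subst sum_ennreal) (auto simp: K_def)
      finally show ?thesis .
    qed
    finally have "C \<le> K * (\<beta>' * B + (\<mu> - 1) * (real m / 8))"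
      using beta'0 B0 mu Kpos by (subst (asm) ennreal_le_iff) auto
    hence "K * (real (2*m) + (\<mu> - 1) * (real m / 2)) \<le> K * (\<beta>' * B + (\<mu> - 1) * (real m / 8))"
      by (simp add: C_def algebra_simps)
    hence main: "real (2*m) + (\<mu> - 1) * (real m / 2) \<le> \<beta>' * B + (\<mu> - 1) * (real m / 8)"
      using Kpos by simp
    have b6: "\<beta>' < \<mu> / 6" using hb mu by (simp add: \<beta>'_def)
    have "\<beta>' * B < \<mu> / 6 * B" using b6 Bpos by simp
    also have "\<mu> / 6 * B \<le> 2 * (real k * real r) + 3 * (\<mu> - 1) * (real k * real r) / 8"
      using param_ineq[OF mu k4, of "real r"] by (simp add: B_def m_def)
    finally have "\<beta>' * B < 2 * real m + 3 * (\<mu> - 1) * real m / 8" by (simp add: m_def)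
    moreover have "(\<mu> - 1) * (real m / 2) = \<mu> * real m / 2 - real m / 2" by (simp add: field_simps)
    moreover have "(\<mu> - 1) * (real m / 8) = \<mu> * real m / 8 - real m / 8" by (simp add: field_simps)
    moreover have "3 * (\<mu> - 1) * real m / 8 = 3 * (\<mu> * real m) / 8 - 3 * real m / 8" by (simp add: field_simps)
    ultimately show False using main by linarith
  qed
qed

end
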